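(* For $p\ge1$, $t\in\mathbb{R}$ and $\phi\in\mathbb{R}$ let \[ \Psi_{p,t}(\phi)=t\sin\big((1-1/p)\phi\big)+2(1-t)\sin\phi\,\cos(\phi/p) =(1-t)\sin\big((1+1/p)\phi\big)+\sin\big((1-1/p)\phi\big), \] and let \[ g(p)=\min\{t\in\mathbb{R}:\ \Psi_{p,t}(\phi)\ge0 \text{ for all } 0<\phi<\pi\}. \] Then the function $g$ is continuous on $[1,\infty)$, $g(1)=1$, $g(p)=0$ for all $p\ge2$, and $g$ is strictly decreasing on $[1,2]$. In particular $g(3/2)=1/5$. *)

theory Defs
  imports "HOL-Analysis.Analysis"
begin

definition Psi :: "real \<Rightarrow> real \<Rightarrow> real \<Rightarrow> real" where
  "Psi p t \<phi> = t * sin ((1 - 1/p) * \<phi>) + 2 * (1 - t) * sin \<phi> * cos (\<phi> / p)"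

definition g :: "real \<Rightarrow> real" where
  "g p = (LEAST t. \<forall>\<phi>. 0 < \<phi> \<and> \<phi> < pi \<longrightarrow> Psi p t \<phi> \<ge> 0)"

end

theory Submission
  imports Defs
begin

definition W :: "real \<Rightarrow> real \<Rightarrow> bool" where
  "W p t \<longleftrightarrow> (\<forall>\<theta>. 0 < \<theta> \<and> \<theta> < pi/p \<longrightarrow> t * sin ((p+1)*\<theta>) \<le> 2 * sin (p*\<theta>) * cos \<theta>)"

definition G :: "real \<Rightarrow> real \<Rightarrow> real" where
  "G p \<theta> = 2 * sin (p*\<theta>) * cos \<theta> / sin ((p+1)*\<theta>)"

lemma Psi_alt: "Psi p t \<phi> = 2 * sin \<phi> * cos (\<phi>/p) - t * sin (\<phi> + \<phi>/p)"
proof -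
  have "(1 - 1/p) * \<phi> = \<phi> - \<phi>/p" by (simp add: algebra_simps)
  then show ?thesis unfolding Psi_def by (simp add: sin_diff sin_add algebra_simps)
qed

lemma V_iff: assumes "p > 0"
  shows "(\<forall>\<phi>. 0 < \<phi> \<and> \<phi> < pi \<longrightarrow> Psi p t \<phi> \<ge> 0) \<longleftrightarrow> W p t"
proof
  assume H: "\<forall>\<phi>. 0 < \<phi> \<and> \<phi> < pi \<longrightarrow> Psi p t \<phi> \<ge> 0"
  show "W p t" unfolding W_def
  proof (intro allI impI)
    fix \<theta> assume h: "0 < \<theta> \<and> \<theta> < pi/p"
    hence "0 < p*\<theta> \<and> p*\<theta> < pi" using assms by (auto simp: field_simps)
    hence "Psi p t (p*\<theta>) \<ge> 0" using H by blast
    moreover have "p*\<theta>/p = \<theta>" using assms by simp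
    moreover have "p*\<theta> + \<theta> = (p+1)*\<theta>" by (simp add: algebra_simps)
    ultimately show "t * sin ((p+1)*\<theta>) \<le> 2 * sin (p*\<theta>) * cos \<theta>"
      by (simp add: Psi_alt)
  qed
next
  assume H: "W p t"
  show "\<forall>\<phi>. 0 < \<phi> \<and> \<phi> < pi \<longrightarrow> Psi p t \<phi> \<ge> 0"
  proof (intro allI impI)
    fix \<phi> assume A: "0 < \<phi> \<and> \<phi> < pi"
    have "0 < \<phi>/p \<and> \<phi>/p < pi/p" using A assms by (simp add: divide_strict_right_mono)
    hence "t * sin ((p+1)*(\<phi>/p)) \<le> 2 * sin (p*(\<phi>/p)) * cos (\<phi>/p)" using H unfolding W_def by blast
    moreover have "(p+1)*(\<phi>/p) = \<phi> + \<phi>/p" "p*(\<phi>/p) = \<phi>" using assms by (auto simp: field_simps)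
    ultimately show "Psi p t \<phi> \<ge> 0" by (simp add: Psi_alt)
  qed
qed

lemma g_eq: assumes "p > 0" "W p m" "\<And>t. W p t \<Longrightarrow> m \<le> t" shows "g p = m"
  unfolding g_def
  apply (rule Least_equality)
  using V_iff[OF assms(1)] assms(2,3) by auto

lemma upper_part:
  assumes "1 \<le> p" "0 \<le> t" "t \<le> 1" "0 < \<theta>" "\<theta> < pi/p" "\<theta> \<le> pi/2"
  shows "t * sin ((p+1)*\<theta>) \<le> 2 * sin (p*\<theta>) * cos \<theta>"
proof -
  have pth: "0 < p*\<theta>" "p*\<theta> < pi" using assms by (auto simp: field_simps)
  have s1: "sin (p*\<theta>) \<ge> 0" using pth by (simp add: sin_ge_zero)
  have c1: "cos \<theta> \<ge> 0" using assms by (intro cos_ge_zero) auto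
  have "(p-1)*\<theta> \<ge> 0" using assms by simp
  moreover have "(p-1)*\<theta> \<le> p*\<theta>" using assms by (simp add: algebra_simps)
  ultimately have s2: "sin ((p-1)*\<theta>) \<ge> 0" using pth by (intro sin_ge_zero) auto
  have e1: "sin ((p+1)*\<theta>) = sin (p*\<theta>)* cos \<theta> + cos (p*\<theta>)* sin \<theta>" by (simp add: distrib_right sin_add)
  have e2: "sin ((p-1)*\<theta>) = sin (p*\<theta>)* cos \<theta> - cos (p*\<theta>)* sin \<theta>" by (simp add: left_diff_distrib sin_diff)
  have A0: "2* sin(p*\<theta>)* cos \<theta> \<ge> 0" using s1 c1 by simp
  have B: "sin ((p+1)*\<theta>) \<le> 2* sin(p*\<theta>)* cos \<theta>" using e1 e2 s2 by linarith
  show ?thesis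
  proof (cases "sin ((p+1)*\<theta>) \<ge> 0")
    case True
    then have "t * sin ((p+1)*\<theta>) \<le> sin ((p+1)*\<theta>)" using assms by (simp add: mult_left_le_one_le)
    then show ?thesis using B by linarith
  next
    case False
    then have "t * sin ((p+1)*\<theta>) \<le> 0" using assms by (simp add: mult_nonneg_nonpos)
    then show ?thesis using A0 by linarith
  qed
qed

lemma sin_neg: "pi < x \<Longrightarrow> x < 2*pi \<Longrightarrow> sin x < 0"
proof -
  assume "pi < x" "x < 2*pi"
  hence "sin (x - pi) > 0" by (intro sin_gt_zero) auto
  moreover have "sin (x - pi) = - sin x" by (simp add: sin_diff)
  ultimately show ?thesis by simp
qed

lemma den_neg: assumes "1 < p" "pi/2 \<le> \<theta>" "\<theta> \<le> pi/p" shows "sin ((p+1)*\<theta>) < 0"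
proof (rule sin_neg)
  have "(p+1)*(pi/2) \<le> (p+1)*\<theta>" using assms by (intro mult_left_mono) auto
  moreover have "(p+1)*(pi/2) - pi = (p-1)*(pi/2)" by (simp add: algebra_simps)
  moreover have "(p-1)*(pi/2) > 0" using assms by simp
  ultimately show "pi < (p+1)*\<theta>" by linarith
  have "(p+1)*\<theta> \<le> (p+1)*(pi/p)" using assms by (intro mult_left_mono) auto
  moreover have "(p+1)*(pi/p) = pi + pi/p" using assms by (simp add: field_simps)
  moreover have "pi/p < pi" using assms by (simp add: divide_less_eq)
  ultimately show "(p+1)*\<theta> < 2*pi" by linarith
qed

lemma G_cont: assumes "1 < p" shows "continuous_on {pi/2..pi/p} (G p)"
proof -
  have nz: "\<forall>x\<in>{pi/2..pi/p}. sin ((p+1)*x) \<noteq> 0" using den_neg[OF assms] by force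
  show ?thesis unfolding G_def
    by (intro continuous_on_divide continuous_intros nz)
qed

lemma G_end1: "G p (pi/2) = 0" by (simp add: G_def)
lemma G_end2: "p \<noteq> 0 \<Longrightarrow> G p (pi/p) = 0" by (simp add: G_def)

lemma G_pos: assumes "1<p" "pi/2 < \<theta>" "\<theta> < pi/p" shows "0 < G p \<theta>" "G p \<theta> < 1"
proof -
  have D: "sin ((p+1)*\<theta>) < 0" using den_neg assms by auto
  have "pi/p < pi" using assms by (simp add: divide_less_eq)
  hence tp: "\<theta> < pi" using assms by linarith
  have th0: "\<theta> > 0" using assms pi_gt_zero by linarith
  have pth1: "0 < p*\<theta>" using assms th0 by simp
  have pth2: "p*\<theta> < pi" using assms by (auto simp: field_simps)
  note pth = pth1 pth2
  have s1: "sin (p*\<theta>) > 0" using pth by (simp add: sin_gt_zero)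
  have c1: "cos \<theta> < 0" using assms tp by (intro cos_lt_zero_pi) auto
  have "2* sin (p*\<theta>)* cos \<theta> < 0" using s1 c1 by (simp add: mult_pos_neg)
  then show "0 < G p \<theta>" unfolding G_def using D by (simp add: divide_neg_neg)
  have "(p-1)*\<theta> > 0" using assms th0 by (intro mult_pos_pos) auto
  moreover have "(p-1)*\<theta> < p*\<theta>" using assms th0 by (simp add: algebra_simps)
  ultimately have s2: "sin ((p-1)*\<theta>) > 0" using pth by (intro sin_gt_zero) auto
  have e1: "sin ((p+1)*\<theta>) = sin (p*\<theta>)* cos \<theta> + cos (p*\<theta>)* sin \<theta>" by (simp add: distrib_right sin_add)
  have e2: "sin ((p-1)*\<theta>) = sin (p*\<theta>)* cos \<theta> - cos (p*\<theta>)* sin \<theta>" by (simp add: left_diff_distrib sin_diff)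
  have "1 * sin ((p+1)*\<theta>) < 2* sin(p*\<theta>)* cos \<theta>" using e1 e2 s2 by linarith
  then show "G p \<theta> < 1" unfolding G_def using D by (simp add: neg_divide_less_eq)
qed


lemma G_mono: assumes "1 < x" "x < y" "pi/2 < \<theta>" "\<theta> < pi/y"
  shows "G y \<theta> < G x \<theta>"
proof -
  have y0: "y > 0" "x > 0" using assms by auto
  have "pi/y < pi/x" using assms y0 by (simp add: frac_less2)
  have "pi/y < pi" using assms by (simp add: divide_less_eq)
  hence tp: "\<theta> < pi" using assms by linarith
  have th0: "\<theta> > 0" using assms pi_gt_zero by linarith
  have Dx: "sin ((x+1)*\<theta>) < 0" using den_neg[of x \<theta>] assms \<open>pi/y < pi/x\<close> by auto
  have Dy: "sin ((y+1)*\<theta>) < 0" using den_neg[of y \<theta>] assms by auto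
  have c: "cos \<theta> < 0" using assms tp by (intro cos_lt_zero_pi) auto
  have s: "sin \<theta> > 0" using th0 tp by (intro sin_gt_zero) auto
  have "y*\<theta> < pi" using assms y0 by (auto simp: field_simps)
  have "(y-x)*\<theta> < y*\<theta>" using assms th0 by (simp add: algebra_simps)
  moreover have "(y-x)*\<theta> > 0" using assms th0 by simp
  ultimately have sd: "sin ((y-x)*\<theta>) > 0" using \<open>y*\<theta> < pi\<close> by (intro sin_gt_zero) auto
  have ex: "sin ((x+1)*\<theta>) = sin (x*\<theta>) * cos \<theta> + cos (x*\<theta>) * sin \<theta>" by (simp add: distrib_right sin_add)
  have ey: "sin ((y+1)*\<theta>) = sin (y*\<theta>) * cos \<theta> + cos (y*\<theta>) * sin \<theta>" by (simp add: distrib_right sin_add)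
  have ed: "sin ((y-x)*\<theta>) = sin (y*\<theta>) * cos (x*\<theta>) - cos (y*\<theta>) * sin (x*\<theta>)" by (simp add: left_diff_distrib sin_diff)
  have key: "2 * sin (y*\<theta>) * cos \<theta> * sin ((x+1)*\<theta>) - 2 * sin (x*\<theta>) * cos \<theta> * sin ((y+1)*\<theta>)
      = 2 * cos \<theta> * sin \<theta> * sin ((y-x)*\<theta>)"
    unfolding ex ey ed by (simp add: algebra_simps)
  have neg: "2 * cos \<theta> * sin \<theta> * sin ((y-x)*\<theta>) < 0" using c s sd by (simp add: mult_neg_pos mult_pos_pos)
  have "G y \<theta> - G x \<theta> = (2 * sin (y*\<theta>) * cos \<theta> * sin ((x+1)*\<theta>) - 2 * sin (x*\<theta>) * cos \<theta> * sin ((y+1)*\<theta>))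
      / (sin ((y+1)*\<theta>) * sin ((x+1)*\<theta>))"
    unfolding G_def using Dx Dy by (simp add: field_simps)
  also have "\<dots> < 0" unfolding key using neg Dx Dy by (simp add: divide_neg_pos mult_neg_neg)
  finally show ?thesis by simp
qed

lemma main_mid: assumes "1<p" "p<2"
  shows "\<exists>\<theta>0. pi/2 < \<theta>0 \<and> \<theta>0 < pi/p \<and> g p = G p \<theta>0 \<and> (\<forall>\<theta>. pi/2 \<le> \<theta> \<and> \<theta> \<le> pi/p \<longrightarrow> G p \<theta> \<le> g p) \<and> 0 < g p \<and> g p < 1"
proof -
  have p0: "p > 0" using assms by simp
  have lt: "pi/2 < pi/p" using assms p0 by (intro divide_strict_left_mono) auto
  obtain \<theta>0 where \<theta>0: "\<theta>0 \<in> {pi/2..pi/p}" "\<forall>\<theta>\<in>{pi/2..pi/p}. G p \<theta> \<le> G p \<theta>0"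
    using continuous_attains_sup[OF compact_Icc _ G_cont[OF assms(1)]] lt by auto
  obtain \<theta>1 where t1: "pi/2 < \<theta>1" "\<theta>1 < pi/p" using lt dense by blast
  then have "0 < G p \<theta>1" using G_pos assms by auto
  moreover have "G p \<theta>1 \<le> G p \<theta>0"
  proof (rule \<theta>0(2)[rule_format])
    show "\<theta>1 \<in> {pi/2..pi/p}" unfolding atLeastAtMost_iff using t1 by linarith
  qed
  ultimately have Mpos: "0 < G p \<theta>0" by linarith
  have i1: "\<theta>0 \<noteq> pi/2"
  proof
    assume "\<theta>0 = pi/2" then show False using Mpos G_end1[of p] by (metis less_irrefl)
  qed
  have i2: "\<theta>0 \<noteq> pi/p"
  proof
    assume "\<theta>0 = pi/p" then show False using Mpos G_end2[of p] p0 by (metis less_irrefl less_numeral_extra(3))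
  qed
  have int: "pi/2 < \<theta>0" "\<theta>0 < pi/p" using \<theta>0(1) i1 i2 by auto
  have M1: "G p \<theta>0 < 1" using G_pos int assms by auto
  have W: "W p (G p \<theta>0)" unfolding W_def
  proof (intro allI impI)
    fix \<theta> assume h: "0 < \<theta> \<and> \<theta> < pi/p"
    show "G p \<theta>0 * sin ((p+1)*\<theta>) \<le> 2 * sin (p*\<theta>) * cos \<theta>"
    proof (cases "\<theta> \<le> pi/2")
      case True then show ?thesis using upper_part[of p "G p \<theta>0" \<theta>] h Mpos M1 assms by auto
    next
      case False
      have D: "sin ((p+1)*\<theta>) < 0" using den_neg[of p \<theta>] False h assms by auto
      have "G p \<theta> \<le> G p \<theta>0" using \<theta>0(2) False h by auto
      hence "G p \<theta>0 * sin ((p+1)*\<theta>) \<le> G p \<theta> * sin ((p+1)*\<theta>)" using D by (intro mult_right_mono_neg) auto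
      also have "\<dots> = 2 * sin (p*\<theta>) * cos \<theta>" using D unfolding G_def by simp
      finally show ?thesis .
    qed
  qed
  have L: "G p \<theta>0 \<le> t" if "W p t" for t
  proof -
    have D: "sin ((p+1)*\<theta>0) < 0" using den_neg[of p \<theta>0] int assms by auto
    have "0 < \<theta>0" using int pi_gt_zero by linarith
    hence "t * sin ((p+1)*\<theta>0) \<le> 2 * sin (p*\<theta>0) * cos \<theta>0" using that int unfolding W_def by blast
    then show ?thesis using D unfolding G_def by (simp add: neg_divide_le_eq)
  qed
  have geq: "g p = G p \<theta>0" using g_eq[OF p0 W L] by simp
  show ?thesis using geq int \<theta>0 Mpos M1 by auto
qed

lemma W_nonneg: assumes "1 < p" "W p t" shows "0 \<le> t"
proof (rule ccontr)
  assume "\<not> 0 \<le> t" hence tn: "t < 0" by simp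
  define a where "a = pi/p"
  define f where "f \<theta> = t * sin ((p+1)*\<theta>) - 2 * sin (p*\<theta>) * cos \<theta>" for \<theta>
  have a0: "0 < a" using assms by (simp add: a_def)
  have "(p+1)*a = a + pi" using assms by (simp add: a_def field_simps)
  moreover have "p*a = pi" using assms by (simp add: a_def)
  ultimately have fa: "f a = - t * sin a" by (simp add: f_def)
  have "a < pi" using assms by (simp add: a_def divide_less_eq)
  hence "sin a > 0" using a0 by (intro sin_gt_zero) auto
  hence fpos: "f a > 0" using fa tn by (simp add: mult_neg_pos)
  have "isCont f a" unfolding f_def by (intro continuous_intros)
  then obtain d where d: "d > 0" "\<And>x. dist x a < d \<Longrightarrow> dist (f x) (f a) < f a"
    using fpos unfolding continuous_at_eps_delta by blast
  define x where "x = a - min (d/2) (a/2)"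
  have "dist x a < d" using d a0 by (simp add: x_def dist_real_def)
  hence "dist (f x) (f a) < f a" using d by blast
  hence fx: "f x > 0" by (simp add: dist_real_def)
  have "0 < x" "x < pi/p" using a0 d by (auto simp: x_def a_def)
  hence "f x \<le> 0" using assms(2) unfolding W_def f_def by auto
  then show False using fx by simp
qed

lemma g_ge2: assumes "p \<ge> 2" shows "g p = 0"
proof (rule g_eq)
  show "p > 0" using assms by simp
  have "pi/p \<le> pi/2" using assms by (intro divide_left_mono) auto
  show "W p 0" unfolding W_def
  proof (intro allI impI)
    fix \<theta> assume h: "0 < \<theta> \<and> \<theta> < pi/p"
    have "0 * sin ((p+1)*\<theta>) \<le> 2 * sin (p*\<theta>) * cos \<theta>"
      by (rule upper_part) (use assms h \<open>pi/p \<le> pi/2\<close> in linarith)+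
    then show "0 * sin ((p+1)*\<theta>) \<le> 2 * sin (p*\<theta>) * cos \<theta>" .
  qed
  show "0 \<le> t" if "W p t" for t using W_nonneg[of p t] that assms by simp
qed

lemma g_1: "g 1 = 1"
proof (rule g_eq)
  show "W 1 1" unfolding W_def by (simp add: sin_double)
  show "1 \<le> t" if "W 1 t" for t
  proof -
    have "0 < 3*pi/4" "3*pi/4 < pi/1" by auto
    hence "t * sin ((1+1)*(3*pi/4)) \<le> 2 * sin (1*(3*pi/4)) * cos (3*pi/4)" using that unfolding W_def by blast
    moreover have "2 * sin (1*(3*pi/4)) * cos (3*pi/4) = sin (2*(3*pi/4))" by (simp only: mult_1 sin_double)
    moreover have "sin (3*pi/2) = -1"
    proof -
      have "sin (3*pi/2) = sin (pi/2 + pi)" by (rule arg_cong[where f=sin]) simp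
      then show ?thesis by (simp only: sin_periodic_pi sin_pi_half)
    qed
    ultimately show ?thesis by simp
  qed
qed simp


lemma sin3: "sin (3*x::real) = 3 * sin x - 4 * sin x ^ 3"
proof -
  have "sin (3*x) = sin (2*x + x)" by (rule arg_cong[where f=sin]) simp
  also have "\<dots> = sin (2*x) * cos x + cos (2*x) * sin x" by (rule sin_add)
  also have "\<dots> = 3 * sin x - 4 * sin x ^ 3"
    unfolding sin_double cos_double_sin using sin_cos_squared_add[of x] by algebra
  finally show ?thesis .
qed

lemma sin5: "sin (5*x::real) = 16 * sin x ^ 5 - 20 * sin x ^ 3 + 5 * sin x"
proof -
  have c3: "cos (3*x) = cos (2*x) * cos x - sin (2*x) * sin x"
  proof -
    have "cos (3*x) = cos (2*x + x)" by (rule arg_cong[where f=cos]) simp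
    also have "\<dots> = cos (2*x) * cos x - sin (2*x) * sin x" by (rule cos_add)
    finally show ?thesis .
  qed
  have "sin (5*x) = sin (3*x + 2*x)" by (rule arg_cong[where f=sin]) simp
  also have "\<dots> = sin (3*x) * cos (2*x) + cos (3*x) * sin (2*x)" by (rule sin_add)
  also have "\<dots> = 16 * sin x ^ 5 - 20 * sin x ^ 3 + 5 * sin x"
    unfolding c3 sin3 sin_double cos_double_sin using sin_cos_squared_add[of x] by algebra
  finally show ?thesis .
qed

lemma g_32: "g (3/2) = 1/5"
proof (rule g_eq)
  show "(0::real) < 3/2" by simp
  show "W (3/2) (1/5)" unfolding W_def
  proof (intro allI impI)
    fix \<theta>::real assume h: "0 < \<theta> \<and> \<theta> < pi/(3/2)"
    define x where "x = \<theta>/2"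
    have x: "0 < x" "x < pi" using h pi_gt_zero unfolding x_def by (auto simp: field_simps)
    define s where "s = sin x"
    have s0: "s > 0" unfolding s_def using x by (intro sin_gt_zero) auto
    have e1: "(3/2+1)*\<theta> = 5*x" "3/2*\<theta> = 3*x" "cos \<theta> = cos (2*x)" unfolding x_def by simp_all
    have key: "2 * (3* s - 4* s^3) * (1 - 2* s^2) - 1/5 * (16* s^5 - 20* s^3 + 5* s) = s/5 * (8* s^2-5)^2"
      by algebra
    have "0 \<le> s/5 * (8* s^2-5)^2" using s0 by simp
    then show "1/5 * sin ((3/2+1)*\<theta>) \<le> 2 * sin (3/2*\<theta>) * cos \<theta>"
      unfolding e1 sin5 sin3 cos_double_sin s_def[symmetric] using key by linarith
  qed
  show "1/5 \<le> t" if W: "W (3/2) t" for t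
  proof -
    define s where "s = sqrt (5/8::real)"
    define x where "x = arcsin s"
    have s0: "0 < s" "s < 1" unfolding s_def by (auto simp: real_sqrt_lt_1_iff)
    have ss: "sin x = s" unfolding x_def using s0 by simp
    have s2: "s^2 = 5/8" unfolding s_def by simp
    have "arcsin 0 < arcsin s" using s0 by (subst arcsin_less_mono) auto
    hence x0: "0 < x" unfolding x_def by simp
    have "s < sqrt (3/4)" unfolding s_def by simp
    also have "sqrt (3/4) = sqrt 3 / 2" by (simp add: real_sqrt_divide)
    finally have "s < sin (pi/3)" by (simp add: sin_60)
    moreover have "\<bar>sin (pi/3)\<bar> \<le> 1" by (rule abs_sin_le_one)
    ultimately have "arcsin s < arcsin (sin (pi/3))" using s0 by (subst arcsin_less_mono) auto
    also have "arcsin (sin (pi/3)) = pi/3" by (rule arcsin_sin) (auto simp: field_simps)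
    finally have x1: "x < pi/3" unfolding x_def .
    have "0 < 2*x" "2*x < pi/(3/2)" using x0 x1 by (auto simp: field_simps)
    hence "t * sin ((3/2+1)*(2*x)) \<le> 2 * sin (3/2*(2*x)) * cos (2*x)" using W unfolding W_def by blast
    moreover have "(3/2+1)*(2*x) = 5*x" "3/2*(2*x) = 3*x" by simp_all
    ultimately have I: "t * (16 * s ^ 5 - 20 * s ^ 3 + 5 * s) \<le> 2 * (3 * s - 4 * s ^ 3) * (1 - 2 * s^2)"
      unfolding ss[symmetric] by (simp only: sin5 sin3 cos_double_sin)
    have p3: "s^3 = 5/8* s" using s2 by (metis power2_eq_square power3_eq_cube mult.commute)
    have p5: "s^5 = 25/64* s"
    proof -
      have "s^5 = (s^2)^2 * s" by algebra
      also have "\<dots> = (5/8)^2 * s" by (simp only: s2)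
      also have "\<dots> = 25/64 * s" by (simp add: power2_eq_square)
      finally show ?thesis .
    qed
    have "t * (-5/4* s) \<le> -(s/4)" using I unfolding p3 p5 s2 by (simp add: algebra_simps)
    hence "0 \<le> (5*t - 1) * s" by (simp add: algebra_simps)
    hence "0 \<le> 5*t - 1" using s0 by (simp add: zero_le_mult_iff)
    then show ?thesis by simp
  qed
qed

definition H :: "real \<Rightarrow> real \<Rightarrow> real" where
  "H p u = G p (pi/2 + u * (pi/p - pi/2))"

lemma rep: assumes "1 < p" "p \<le> 2"
  shows "(\<forall>u\<in>{0..1}. H p u \<le> g p) \<and> (\<exists>u\<in>{0..1}. H p u = g p)"
proof (cases "p = 2")
  case True
  have "g p = 0" using g_ge2 True by simp
  moreover have "H p u = 0" for u using True by (simp add: H_def G_end1)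
  ultimately show ?thesis by auto
next
  case False
  then have p2: "p < 2" using assms by simp
  obtain \<theta>0 where T: "pi/2 < \<theta>0" "\<theta>0 < pi/p" "g p = G p \<theta>0"
    "\<forall>\<theta>. pi/2 \<le> \<theta> \<and> \<theta> \<le> pi/p \<longrightarrow> G p \<theta> \<le> g p"
    using main_mid[OF assms(1) p2] by blast
  define L where "L = pi/p - pi/2"
  have L0: "L > 0" using T unfolding L_def by linarith
  have A: "\<forall>u\<in>{0..1}. H p u \<le> g p"
  proof
    fix u::real assume u: "u \<in> {0..1}"
    have "0 \<le> u*L" using u L0 by simp
    moreover have "u*L \<le> L" using u L0 by (simp add: mult_left_le_one_le)
    ultimately have "pi/2 \<le> pi/2 + u*L" "pi/2 + u*L \<le> pi/p" unfolding L_def by linarith+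
    then show "H p u \<le> g p" using T(4) unfolding H_def L_def by blast
  qed
  define u0 where "u0 = (\<theta>0 - pi/2)/L"
  have "0 \<le> u0" "u0 \<le> 1" unfolding u0_def using T L0 by (auto simp: L_def divide_le_eq_1)
  moreover have "pi/2 + u0*L = \<theta>0" unfolding u0_def using L0 by simp
  hence "H p u0 = g p" using T(3) unfolding H_def L_def by simp
  ultimately show ?thesis using A by auto
qed

lemma Hcont: assumes "1 < p1"
  shows "continuous_on ({p1..2} \<times> {0..1}) (\<lambda>z. H (fst z) (snd z))"
proof -
  let ?S = "{p1..2} \<times> {0..(1::real)}"
  have nz1: "\<forall>z\<in>?S. fst z \<noteq> 0" using assms by auto
  have nz2: "\<forall>z\<in>?S. sin ((fst z + 1) * (pi/2 + snd z * (pi/fst z - pi/2))) \<noteq> 0"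
  proof
    fix z assume z: "z \<in> ?S"
    define p where "p = fst z"
    define u where "u = snd z"
    have p: "1 < p" "p \<le> 2" and u: "0 \<le> u" "u \<le> 1" using z assms unfolding p_def u_def by auto
    have "pi/2 \<le> pi/p" using p by (intro divide_left_mono) auto
    hence L0: "0 \<le> pi/p - pi/2" by simp
    have "0 \<le> u*(pi/p - pi/2)" using u L0 by simp
    moreover have "u*(pi/p - pi/2) \<le> pi/p - pi/2" using u L0 by (simp add: mult_left_le_one_le)
    ultimately have "sin ((p + 1) * (pi/2 + u * (pi/p - pi/2))) < 0" using p by (intro den_neg) auto
    then show "sin ((fst z + 1) * (pi/2 + snd z * (pi/fst z - pi/2))) \<noteq> 0" unfolding p_def u_def by simp
  qed
  show ?thesis unfolding H_def G_def
    by (intro continuous_intros nz1 nz2)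
qed

lemma UC: assumes "1 < p1" "e > 0"
  shows "\<exists>d>0. \<forall>p\<in>{p1..2}. \<forall>q\<in>{p1..2}. dist p q < d \<longrightarrow> g p < g q + e"
proof -
  let ?S = "{p1..2} \<times> {0..(1::real)}"
  have "uniformly_continuous_on ?S (\<lambda>z. H (fst z) (snd z))"
    by (intro compact_uniformly_continuous Hcont assms compact_Times compact_Icc)
  then obtain d where d: "d > 0" "\<forall>x\<in>?S. \<forall>x'\<in>?S. dist x' x < d \<longrightarrow> dist (H (fst x') (snd x')) (H (fst x) (snd x)) < e"
    using assms(2) unfolding uniformly_continuous_on_def by blast
  show ?thesis
  proof (intro exI[of _ d] conjI ballI impI)
    show "d > 0" by (rule d(1))
    fix p q assume p: "p \<in> {p1..2}" and q: "q \<in> {p1..2}" and pq: "dist p q < d"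
    obtain u where u: "u \<in> {0..1}" "H p u = g p" using rep[of p] p assms by auto
    have Hq: "H q u \<le> g q" using rep[of q] q assms u by auto
    have "dist (q,u) (p,u) = dist q p" by (simp add: dist_Pair_Pair)
    hence "dist (q,u) (p,u) < d" using pq by (simp add: dist_commute)
    hence "dist (H q u) (H p u) < e" using d(2) p q u by fastforce
    then show "g p < g q + e" using u Hq by (simp add: dist_real_def)
  qed
qed

lemma g_le1: assumes "1 \<le> p" "p \<le> 2" shows "g p \<le> 1"
proof -
  consider "p = 1" | "1 < p \<and> p < 2" | "p = 2" using assms by linarith
  then show ?thesis
  proof cases
    case 1 then show ?thesis using g_1 by simp
  next
    case 2 then show ?thesis using main_mid[of p] by auto
  next
    case 3 then show ?thesis using g_ge2[of p] by simp
  qed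
qed

lemma near1: assumes "e > 0" shows "\<exists>d>0. \<forall>p. 1 < p \<and> p < 1 + d \<longrightarrow> 1 - e < g p"
proof -
  define a where "a = 3*pi/4"
  define f where "f p = G p a" for p
  have nz: "sin ((1+1)*a) \<noteq> 0"
  proof -
    have "sin ((1+1)*a) = sin (pi/2 + pi)" unfolding a_def by (rule arg_cong[where f=sin]) simp
    then show ?thesis by (simp only: sin_periodic_pi sin_pi_half) 
  qed
  have f1: "f 1 = 1" unfolding f_def G_def using nz
    by (simp only: mult_1 sin_double[symmetric] one_add_one) simp
  have "isCont f 1" unfolding f_def G_def using nz by (intro continuous_intros) auto
  then obtain d where d: "d > 0" "\<And>x. dist x 1 < d \<Longrightarrow> dist (f x) (f 1) < e"
    using assms unfolding continuous_at_eps_delta by blast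
  show ?thesis
  proof (intro exI[of _ "min d (1/3)"] conjI allI impI)
    show "0 < min d (1/3)" using d by simp
    fix p assume p: "1 < p \<and> p < 1 + min d (1/3)"
    have "min d (1/3) \<le> d" "min d (1/3) \<le> 1/3" by simp_all
    hence pd: "p < 1 + d" "p < 4/3" using p by linarith+
    have "dist p 1 < d" using p pd by (simp add: dist_real_def)
    hence "dist (f p) (f 1) < e" using d(2) by blast
    hence "1 - e < f p" using f1 by (simp add: dist_real_def)
    moreover have "f p \<le> g p"
    proof -
      have p2: "1 < p" "p < 2" using p pd by linarith+
      have T: "\<forall>\<theta>. pi/2 \<le> \<theta> \<and> \<theta> \<le> pi/p \<longrightarrow> G p \<theta> \<le> g p"
        using main_mid[OF p2] by blast
      have "a \<le> pi/p" unfolding a_def using p pd by (simp add: field_simps)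
      moreover have "pi/2 \<le> a" unfolding a_def by simp
      ultimately show ?thesis using T unfolding f_def by blast
    qed
    ultimately show "1 - e < g p" by linarith
  qed
qed

lemma cont12: "continuous_on {1..2} g"
  unfolding continuous_on_iff
proof (intro ballI allI impI)
  fix x e :: real assume x: "x \<in> {1..2}" and e: "e > 0"
  show "\<exists>d>0. \<forall>x'\<in>{1..2}. dist x' x < d \<longrightarrow> dist (g x') (g x) < e"
  proof (cases "x = 1")
    case True
    obtain d where d: "d > 0" "\<forall>p. 1 < p \<and> p < 1 + d \<longrightarrow> 1 - e < g p" using near1[OF e] by blast
    show ?thesis
    proof (intro exI[of _ d] conjI ballI impI)
      show "d > 0" by (rule d(1))
      fix x' assume x': "x' \<in> {1..2}" "dist x' x < d"
      show "dist (g x') (g x) < e"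
      proof (cases "x' = 1")
        case True then show ?thesis using \<open>x = 1\<close> e by simp
      next
        case False
        then have "1 < x' \<and> x' < 1 + d" using x' \<open>x = 1\<close> by (auto simp: dist_real_def)
        then have "1 - e < g x'" using d by blast
        moreover have "g x' \<le> 1" using g_le1 x' by auto
        ultimately show ?thesis using \<open>x = 1\<close> g_1 by (simp add: dist_real_def)
      qed
    qed
  next
    case False
    define p1 where "p1 = (1 + x)/2"
    have p1: "1 < p1" "p1 < x" using x False unfolding p1_def by auto
    obtain d where d: "d > 0" "\<forall>p\<in>{p1..2}. \<forall>q\<in>{p1..2}. dist p q < d \<longrightarrow> g p < g q + e"
      using UC[OF p1(1) e] by blast
    show ?thesis
    proof (intro exI[of _ "min d (x - p1)"] conjI ballI impI)
      show "0 < min d (x - p1)" using d p1 by simp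
      fix x' assume x': "x' \<in> {1..2}" "dist x' x < min d (x - p1)"
      have "x' \<in> {p1..2}" using x' by (auto simp: dist_real_def)
      moreover have "x \<in> {p1..2}" using x p1 by auto
      moreover have "dist x' x < d" "dist x x' < d" using x' by (auto simp: dist_commute)
      ultimately have "g x' < g x + e" "g x < g x' + e" using d(2) by blast+
      then show "dist (g x') (g x) < e" by (simp add: dist_real_def)
    qed
  qed
qed

theorem mainTheorem2:
  shows "continuous_on {1..} g \<and> g 1 = 1 \<and> (\<forall>p\<ge>2. g p = 0)
     \<and> (\<forall>x\<in>{1..2}. \<forall>y\<in>{1..2}. x < y \<longrightarrow> g y < g x)
     \<and> g (3/2) = 1/5"
proof (intro conjI)
  have c2: "continuous_on {2..} g"
    by (rule continuous_on_eq[OF continuous_on_const[of "{2..}" "0::real"]]) (auto simp: g_ge2)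
  have "{1..} = {1..2} \<union> {2::real..}" by auto
  then show "continuous_on {1..} g" using continuous_on_closed_Un[OF closed_atLeastAtMost closed_atLeast cont12 c2] by simp
  show "g 1 = 1" by (rule g_1)
  show "\<forall>p\<ge>2. g p = 0" using g_ge2 by auto
  show "g (3/2) = 1/5" by (rule g_32)
  show "\<forall>x\<in>{1..2}. \<forall>y\<in>{1..2}. x < y \<longrightarrow> g y < g x"
  proof (intro ballI impI)
    fix x y :: real assume x: "x \<in> {1..2}" and y: "y \<in> {1..2}" and xy: "x < y"
    show "g y < g x"
    proof (cases "y = 2")
      case True
      have "0 < g x"
      proof (cases "x = 1")
        case True then show ?thesis using g_1 by simp
      next
        case False then show ?thesis using main_mid[of x] x xy \<open>y = 2\<close> by auto
      qed
      then show ?thesis using g_ge2 True by simp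
    next
      case False
      then have y2: "1 < y" "y < 2" using y xy x by auto
      obtain \<theta>0 where T: "pi/2 < \<theta>0" "\<theta>0 < pi/y" "g y = G y \<theta>0" "g y < 1"
        using main_mid[OF y2] by blast
      show ?thesis
      proof (cases "x = 1")
        case True then show ?thesis using T g_1 by simp
      next
        case False
        then have x1: "1 < x" using x by auto
        have "G y \<theta>0 < G x \<theta>0" using G_mono[OF x1 xy T(1) T(2)] .
        moreover have "pi/y < pi/x" using x1 xy by (intro divide_strict_left_mono) auto
        then have "G x \<theta>0 \<le> g x" using main_mid[of x] x1 xy y2 T by auto
        ultimately show ?thesis using T by simp
      qed
    qed
  qed
qed

end
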